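(* Let $\ell\ge 1$ be an integer and let $D_{2m}=\langle u,v : u^m=e=v^2,\ vu=u^{m-1}v\rangle$ denote the dihedral group of order $2m$. Let $(a_1,\dots,a_{2\ell})$ be a graceful permutation of length $2\ell$ with sequence of absolute differences $(b_1,\dots,b_{2\ell-1})$, and let $(c_1,\dots,c_{2\ell+1})$ be a graceful permutation of length $2\ell+1$ with sequence of absolute differences $(d_1,\dots,d_{2\ell})$. Then: 1. if $a_{2\ell}=\ell$, then $D_{8\ell+2}$ has a sequencing with first element $u^{b_1}$; 2. if $a_1=\ell$ and $a_{2\ell}=\ell-1$, then $D_{8\ell+2}$ has a sequencing with first element $u^{b_1}$ and a sequencing with first element $u^{b_{2\ell-1}}$; 3. if $c_1=\ell$ and $c_{2\ell+1}=\ell-1$, then $D_{8\ell+6}$ has a sequencing with first element $u^{d_1}$ and a sequencing with first element $u^{d_{2\ell}}$.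
   Context: A graceful permutation of length $n$ is an arrangement $(a_1,\dots,a_n)$ of the integers $\{0,1,\dots,n-1\}$ such that its sequence of absolute differences $(|a_2-a_1|,|a_3-a_2|,\dots,|a_n-a_{n-1}|)$ consists of the integers $\{1,\dots,n-1\}$. A sequencing of a finite group $G$ with identity $e$ is an ordering $(g_1,\dots,g_{|G|-1})$ of the elements of $G\setminus\{e\}$ such that the partial products $e, g_1, g_1g_2,\dots,g_1\cdots g_{|G|-1}$ are pairwise distinct. *)

theory Defs
  imports "HOL-Algebra.Group"
begin

definition absdiffs :: "nat list \<Rightarrow> nat list" where
  "absdiffs as = map (\<lambda>i. nat \<bar>int (as ! Suc i) - int (as ! i)\<bar>) [0..<length as - 1]"

text \<open>Graceful permutation of length n (list indices are 0-based: a_i = as ! (i-1)).\<close>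
definition graceful_perm :: "nat \<Rightarrow> nat list \<Rightarrow> bool" where
  "graceful_perm n as \<longleftrightarrow> length as = n \<and> distinct as \<and> set as = {0..<n}
     \<and> distinct (absdiffs as) \<and> set (absdiffs as) = {1..<n}"

definition sequencing :: "('a, 'b) monoid_scheme \<Rightarrow> 'a list \<Rightarrow> bool" where
  "sequencing G gs \<longleftrightarrow> distinct gs \<and> set gs = carrier G - {\<one>\<^bsub>G\<^esub>}
     \<and> distinct (map (\<lambda>k. foldl (\<otimes>\<^bsub>G\<^esub>) \<one>\<^bsub>G\<^esub> (take k gs)) [0..<Suc (length gs)])"

text \<open>Dihedral group of order 2m: the pair (i, s) represents u^i v^s (s = True meaning v^1),
  with u = (1, False), v = (0, True); then u^m = e = v^2 and v u = u^(m-1) v.\<close>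
definition dihedral :: "nat \<Rightarrow> (nat \<times> bool) monoid" where
  "dihedral m = \<lparr> carrier = {0..<m} \<times> UNIV,
     mult = (\<lambda>(i, s) (j, t). ((if s then i + (m - j) else i + j) mod m, s \<noteq> t)),
     one = (0, False) \<rparr>"

definition dih_u :: "nat \<times> bool" where "dih_u = (1, False)"

end

theory Submission
  imports Defs
begin

lemma dih_mult:
  assumes "i < m" "j < m"
  shows "mult (dihedral m) (i,s) (j,t) = (nat ((int i + (if s then - int j else int j)) mod int m), s \<noteq> t)"
proof -
  have "(if s then i + (m - j) else i + j) mod m = nat ((int i + (if s then - int j else int j)) mod int m)"
  proof (cases s)
    case True
    have "int ((i + (m - j)) mod m) = (int i + int m - int j) mod int m"
      using assms by (simp add: zmod_int of_nat_diff)
    also have "\<dots> = (int i - int j) mod int m"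
      by (metis add.commute add_diff_eq mod_add_self2)
    finally show ?thesis using True by (metis diff_conv_add_uminus nat_int)
  next
    case False
    then show ?thesis by (simp add: nat_mod_distrib nat_add_distrib)
  qed
  then show ?thesis by (simp add: dihedral_def)
qed

lemma dih_pow_Suc: "dih_u [^]\<^bsub>dihedral m\<^esub> (Suc k) = mult (dihedral m) (dih_u [^]\<^bsub>dihedral m\<^esub> k) dih_u"
  by (simp add: nat_pow_def)

lemma dih_pow: "m \<ge> 2 \<Longrightarrow> dih_u [^]\<^bsub>dihedral m\<^esub> (k::nat) = (k mod m, False)"
proof (induction k)
  case 0
  then show ?case by (simp add: nat_pow_def dihedral_def)
next
  case (Suc k)
  have "dih_u [^]\<^bsub>dihedral m\<^esub> (Suc k) = mult (dihedral m) (k mod m, False) (1, False)"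
    by (simp only: dih_pow_Suc Suc.IH[OF Suc.prems]) (simp add: dih_u_def)
  also have "\<dots> = (nat ((int (k mod m) + 1) mod int m), False)"
  proof -
    have "k mod m < m" "1 < m" using Suc.prems by auto
    from dih_mult[OF this, of False False] show ?thesis by simp
  qed
  also have "nat ((int (k mod m) + 1) mod int m) = Suc k mod m"
  proof -
    have "(int (k mod m) + 1) mod int m = int (Suc k mod m)"
      by (simp add: zmod_int mod_Suc_eq) (metis add.commute mod_add_left_eq)
    then show ?thesis by simp
  qed
  finally show ?case .
qed


definition elt :: "nat \<Rightarrow> int \<Rightarrow> int \<Rightarrow> nat \<times> bool \<Rightarrow> nat \<times> bool" where
  "elt m sg t p = (nat ((if snd p then - (sg * (int (fst p) - t)) else sg * (int (fst p) - t)) mod int m), snd p)"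

definition lab :: "nat \<Rightarrow> int \<Rightarrow> int \<Rightarrow> nat \<times> bool \<Rightarrow> nat \<times> bool \<Rightarrow> nat \<times> bool" where
  "lab m sg t p q = (if snd p = snd q then (nat ((sg * (int (fst q) - int (fst p))) mod int m), False)
     else (nat ((- (sg * (int (fst p) - t) + sg * (int (fst q) - t))) mod int m), True))"

lemma mult_lab:
  assumes "m \<ge> 1"
  shows "mult (dihedral m) (elt m sg t p) (lab m sg t p q) = elt m sg t q"
proof -
  obtain x s where p: "p = (x, s)" by force
  obtain y r where q: "q = (y, r)" by force
  define X where "X = sg * (int x - t)"
  define Y where "Y = sg * (int y - t)"
  have mpos: "int m > 0" using assms by simp
  define P where "P = (if s then - X else X)"
  define L where "L = (if s = r then Y - X else - (X + Y))"
  have e1: "elt m sg t p = (nat (P mod int m), s)" unfolding elt_def p P_def X_def by simp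
  have e2: "elt m sg t q = (nat ((if r then - Y else Y) mod int m), r)" unfolding elt_def q Y_def by simp
  have l: "lab m sg t p q = (nat (L mod int m), s \<noteq> r)"
    unfolding lab_def p q L_def X_def Y_def by (auto simp: algebra_simps)
  have i1: "nat (P mod int m) < m" using mpos by (simp add: nat_less_iff)
  have i2: "nat (L mod int m) < m" using mpos by (simp add: nat_less_iff)
  have "mult (dihedral m) (elt m sg t p) (lab m sg t p q)
      = (nat ((P mod int m + (if s then - (L mod int m) else L mod int m)) mod int m), s \<noteq> (s \<noteq> r))"
    unfolding e1 l using dih_mult[OF i1 i2] mpos by simp
  also have "(P mod int m + (if s then - (L mod int m) else L mod int m)) mod int m = (if r then - Y else Y) mod int m"
  proof (cases s)
    case True
    then have "(P mod int m + (if s then - (L mod int m) else L mod int m)) mod int m = (P - L) mod int m"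
      by (simp add: mod_diff_eq)
    also have "P - L = (if r then - Y else Y)" using True unfolding P_def L_def by auto
    finally show ?thesis .
  next
    case False
    then have "(P mod int m + (if s then - (L mod int m) else L mod int m)) mod int m = (P + L) mod int m"
      by (simp add: mod_add_eq)
    also have "P + L = (if r then - Y else Y)" using False unfolding P_def L_def by auto
    finally show ?thesis .
  qed
  finally show ?thesis using e2 by auto
qed

lemma sgsq: "sg = 1 \<or> sg = -1 \<Longrightarrow> sg * sg = (1::int)" by auto

lemma card_dih: "card (carrier (dihedral m)) = 2 * m"
  by (simp add: dihedral_def card_cartesian_product)

lemma fin_dih: "finite (carrier (dihedral m))"
  by (simp add: dihedral_def)

lemma one_dih: "one (dihedral m) = (0, False)" by (simp add: dihedral_def)

lemma elt_in: "m \<ge> 1 \<Longrightarrow> elt m sg t p \<in> carrier (dihedral m)"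
  by (simp add: elt_def dihedral_def nat_less_iff)

lemma lab_in: "m \<ge> 1 \<Longrightarrow> lab m sg t p q \<in> carrier (dihedral m)"
  by (simp add: lab_def dihedral_def nat_less_iff)


lemma mod_sg_aux: "(sg * ((a::int) mod m - t)) mod m = (sg * (a - t)) mod m"
  by (metis mod_diff_left_eq mod_mult_right_eq)

lemma seq_from_path:
  fixes f :: "nat \<Rightarrow> nat \<times> bool" and m :: nat and sg :: int
  assumes m: "m \<ge> 2" and sg: "sg = 1 \<or> sg = -1"
    and start: "snd (f 0) = False"
    and N: "\<And>s w. w < m \<Longrightarrow> \<exists>k<2*m. f k = (w, s)"
    and LR: "\<And>w. 0 < w \<Longrightarrow> w < m \<Longrightarrow> \<exists>k<2*m-1. snd (f k) = snd (f (Suc k)) \<and>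
               (fst (f (Suc k)) = fst (f k) + w \<or> fst (f k) = fst (f (Suc k)) + (m - w))"
    and LF: "\<And>w. w < m \<Longrightarrow> \<exists>k<2*m-1. snd (f k) \<noteq> snd (f (Suc k)) \<and> (fst (f k) + fst (f (Suc k))) mod m = w"
  shows "sequencing (dihedral m) (map (\<lambda>k. lab m sg (int (fst (f 0))) (f k) (f (Suc k))) [0..<2*m-1])"
proof -
  define t where "t = int (fst (f 0))"
  define gs where "gs = map (\<lambda>k. lab m sg t (f k) (f (Suc k))) [0..<2*m-1]"
  define E where "E = (\<lambda>k. elt m sg t (f k))"
  have m1: "m \<ge> 1" using m by simp
  have mpos: "int m > 0" using m by simp
  have ss: "sg * sg = 1" using sgsq[OF sg] .
  have lg: "length gs = 2*m-1" unfolding gs_def by simp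
  have pp: "foldl (mult (dihedral m)) (one (dihedral m)) (take k gs) = E k" if "k \<le> 2*m-1" for k
    using that
  proof (induction k)
    case 0
    then show ?case using start by (simp add: one_dih E_def elt_def t_def)
  next
    case (Suc k)
    then have k: "k < length gs" using lg by simp
    have "take (Suc k) gs = take k gs @ [gs ! k]" using take_Suc_conv_app_nth[OF k] .
    moreover have "gs ! k = lab m sg t (f k) (f (Suc k))" using k lg unfolding gs_def by simp
    ultimately show ?case using Suc mult_lab[OF m1] by (simp add: E_def)
  qed
  have car: "carrier (dihedral m) = {0..<m} \<times> UNIV" by (simp add: dihedral_def)
  have setE: "E ` {0..<2*m} = carrier (dihedral m)"
  proof
    show "E ` {0..<2*m} \<subseteq> carrier (dihedral m)" unfolding E_def by (rule image_subsetI) (rule elt_in[OF m1])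
  next
    show "carrier (dihedral m) \<subseteq> E ` {0..<2*m}"
    proof
      fix z assume "z \<in> carrier (dihedral m)"
      then obtain i s where z: "z = (i, s)" "i < m" unfolding car by auto
      define r where "r = (if s then t - sg * int i else t + sg * int i)"
      define w where "w = nat (r mod int m)"
      have w: "w < m" "int w = r mod int m" unfolding w_def using mpos by (auto simp: nat_less_iff)
      obtain k where k: "k < 2*m" "f k = (w, s)" using N[OF w(1)] by blast
      have "(sg * (int w - t)) mod int m = (sg * (r - t)) mod int m" using w(2) mod_sg_aux by simp
      also have "sg * (r - t) = (if s then - int i else int i)" unfolding r_def using ss
        by (auto simp: algebra_simps)
      finally have h: "(sg * (int w - t)) mod int m = (if s then - int i else int i) mod int m" .
      have "(if s then - (sg * (int w - t)) else sg * (int w - t)) mod int m = int i"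
      proof (cases s)
        case True
        have "(- (sg * (int w - t))) mod int m = (- ((sg * (int w - t)) mod int m)) mod int m"
          by (simp add: mod_minus_eq)
        also have "\<dots> = (- ((- int i) mod int m)) mod int m" using h True by simp
        also have "\<dots> = int i mod int m" by (simp add: mod_minus_eq)
        finally show ?thesis using True z(2) by simp
      next
        case False
        then show ?thesis using h z(2) by simp
      qed
      then have "E k = z" unfolding E_def elt_def k(2) z by (cases s) auto
      then show "z \<in> E ` {0..<2*m}" using k by auto
    qed
  qed
  have distE: "distinct (map E [0..<2*m])"
  proof -
    have "card (set (map E [0..<2*m])) = 2*m" using setE card_dih by simp
    then show ?thesis by (intro card_distinct) simp
  qed
  have setg: "set gs \<subseteq> carrier (dihedral m)" unfolding gs_def set_map by (rule image_subsetI) (rule lab_in[OF m1])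
  have covg: "carrier (dihedral m) - {one (dihedral m)} \<subseteq> set gs"
  proof
    fix z assume zin: "z \<in> carrier (dihedral m) - {one (dihedral m)}"
    obtain i s where z0: "z = (i, s)" by force
    have z: "z = (i, s)" "i < m" "i \<noteq> 0 \<or> s" using zin unfolding z0 car one_dih by auto
    show "z \<in> set gs"
    proof (cases s)
      case False
      then have ip: "0 < i" using z by auto
      define w where "w = nat ((sg * int i) mod int m)"
      have w: "w < m" "int w = (sg * int i) mod int m" unfolding w_def using mpos by (auto simp: nat_less_iff)
      have w0: "0 < w"
      proof (rule ccontr)
        assume "\<not> 0 < w"
        then have "(sg * int i) mod int m = 0" using w by simp
        then have "(sg * (sg * int i)) mod int m = 0" by (metis mod_mult_right_eq mult_zero_right mod_0)
        then have "int i mod int m = 0" using ss by (simp add: mult.assoc[symmetric])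
        then show False using ip z(2) by simp
      qed
      obtain k where k: "k < 2*m-1" "snd (f k) = snd (f (Suc k))"
        "fst (f (Suc k)) = fst (f k) + w \<or> fst (f k) = fst (f (Suc k)) + (m - w)"
        using LR[OF w0 w(1)] by blast
      have d: "(int (fst (f (Suc k))) - int (fst (f k))) mod int m = int w mod int m"
      proof (cases "fst (f (Suc k)) = fst (f k) + w")
        case True then show ?thesis by simp
      next
        case False
        then have "int (fst (f (Suc k))) - int (fst (f k)) = int w - int m" using k(3) w(1) by auto
        then show ?thesis by simp
      qed
      have "(sg * (int (fst (f (Suc k))) - int (fst (f k)))) mod int m = (sg * int w) mod int m"
        using d by (metis mod_mult_right_eq)
      also have "\<dots> = (sg * (sg * int i)) mod int m" using w(2) by (metis mod_mult_right_eq)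
      also have "\<dots> = int i" using ss z(2) by (simp add: mult.assoc[symmetric])
      finally have "lab m sg t (f k) (f (Suc k)) = z" unfolding lab_def z using k(2) False by simp
      moreover have "lab m sg t (f k) (f (Suc k)) \<in> set gs" unfolding gs_def using k(1) by auto
      ultimately show ?thesis by simp
    next
      case True
      define r where "r = 2 * t - sg * int i"
      define w where "w = nat (r mod int m)"
      have w: "w < m" "int w = r mod int m" unfolding w_def using mpos by (auto simp: nat_less_iff)
      obtain k where k: "k < 2*m-1" "snd (f k) \<noteq> snd (f (Suc k))" "(fst (f k) + fst (f (Suc k))) mod m = w"
        using LF[OF w(1)] by blast
      define x where "x = int (fst (f k))"
      define y where "y = int (fst (f (Suc k)))"
      have xy: "(x + y) mod int m = r mod int m" using k(3) w(2) unfolding x_def y_def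
        by (metis of_nat_add zmod_int)
      have "(- (sg * (x - t) + sg * (y - t))) mod int m = (2 * sg * t - sg * (x + y)) mod int m"
        by (simp add: algebra_simps)
      also have "\<dots> = (2 * sg * t - sg * r) mod int m"
        using xy by (metis mod_diff_right_eq mod_mult_right_eq)
      also have "2 * sg * t - sg * r = int i" unfolding r_def using ss by (simp add: algebra_simps)
      finally have "lab m sg t (f k) (f (Suc k)) = z" unfolding lab_def z x_def y_def using k(2) True z(2) by simp
      moreover have "lab m sg t (f k) (f (Suc k)) \<in> set gs" unfolding gs_def using k(1) by auto
      ultimately show ?thesis by simp
    qed
  qed
  have cardg: "card (set gs) \<le> 2*m-1" using card_length[of gs] lg by simp
  have one_notin: "one (dihedral m) \<notin> set gs"
  proof
    assume "one (dihedral m) \<in> set gs"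
    then have "carrier (dihedral m) \<subseteq> set gs" using covg by auto
    then have "card (carrier (dihedral m)) \<le> card (set gs)" by (simp add: card_mono)
    then show False using cardg card_dih m by simp
  qed
  have setg2: "set gs = carrier (dihedral m) - {one (dihedral m)}" using setg covg one_notin by auto
  have distg: "distinct gs"
  proof -
    have "one (dihedral m) \<in> carrier (dihedral m)" using m1 by (simp add: one_dih dihedral_def)
    then have "card (set gs) = 2*m-1" using setg2 card_dih fin_dih by (simp add: card_Diff_singleton)
    then show ?thesis using card_distinct lg by metis
  qed
  have "map (\<lambda>k. foldl (mult (dihedral m)) (one (dihedral m)) (take k gs)) [0..<Suc (length gs)] = map E [0..<2*m]"
    using pp lg m by (auto intro!: map_cong)
  then show ?thesis using distg setg2 distE unfolding sequencing_def gs_def[symmetric] t_def[symmetric] by simp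
qed


lemma absdiffs_length: "length (absdiffs a) = length a - 1"
  by (simp add: absdiffs_def)

lemma absdiffs_nth: "i < length a - 1 \<Longrightarrow> absdiffs a ! i = nat \<bar>int (a ! Suc i) - int (a ! i)\<bar>"
  by (simp add: absdiffs_def)

lemma gr_len: "graceful_perm n a \<Longrightarrow> length a = n"
  by (simp add: graceful_perm_def)

lemma gr_lt: "graceful_perm n a \<Longrightarrow> i < n \<Longrightarrow> a ! i < n"
  unfolding graceful_perm_def by (metis atLeastLessThan_iff nth_mem)

lemma gr_val: "graceful_perm n a \<Longrightarrow> w < n \<Longrightarrow> \<exists>i<n. a ! i = w"
  unfolding graceful_perm_def by (metis atLeast0LessThan in_set_conv_nth lessThan_iff)

lemma gr_diff:
  assumes "graceful_perm n a" "1 \<le> b" "b < n"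
  shows "\<exists>i. Suc i < n \<and> (a ! Suc i = a ! i + b \<or> a ! i = a ! Suc i + b)"
proof -
  have "b \<in> set (absdiffs a)" using assms unfolding graceful_perm_def by auto
  then obtain i where i: "i < length (absdiffs a)" "absdiffs a ! i = b" by (metis in_set_conv_nth)
  have l: "length a = n" using assms(1) by (simp add: graceful_perm_def)
  have "i < n - 1" using i(1) l absdiffs_length by metis
  then have "nat \<bar>int (a ! Suc i) - int (a ! i)\<bar> = b" using i(2) absdiffs_nth l by metis
  then have "a ! Suc i = a ! i + b \<or> a ! i = a ! Suc i + b" by linarith
  moreover have "Suc i < n" using \<open>i < n - 1\<close> by simp
  ultimately show ?thesis by blast
qed

definition rc :: "nat \<Rightarrow> nat list \<Rightarrow> nat list" where
  "rc n a = map (\<lambda>x. n - 1 - x) (rev a)"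

lemma rc_nth: "length a = n \<Longrightarrow> i < n \<Longrightarrow> rc n a ! i = n - 1 - a ! (n - 1 - i)"
  by (simp add: rc_def rev_nth)

lemma absdiffs_rc:
  assumes g: "graceful_perm n a"
  shows "absdiffs (rc n a) = rev (absdiffs a)"
proof (rule nth_equalityI)
  have l: "length a = n" using g by (simp add: graceful_perm_def)
  show "length (absdiffs (rc n a)) = length (rev (absdiffs a))"
    by (simp add: absdiffs_length rc_def)
  fix i assume "i < length (absdiffs (rc n a))"
  then have i: "i < n - 1" by (simp add: absdiffs_length rc_def l)
  have lr: "length (rc n a) = n" by (simp add: rc_def l)
  have "absdiffs (rc n a) ! i = nat \<bar>int (rc n a ! Suc i) - int (rc n a ! i)\<bar>"
    using absdiffs_nth[of i "rc n a"] i lr by simp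
  also have "\<dots> = nat \<bar>int (n - 1 - a ! (n - 2 - i)) - int (n - 1 - a ! (n - 1 - i))\<bar>"
    using i l by (simp add: rc_nth numeral_2_eq_2 Suc_diff_Suc)
  also have "\<dots> = nat \<bar>int (a ! Suc (n - 2 - i)) - int (a ! (n - 2 - i))\<bar>"
  proof -
    have "a ! (n - 2 - i) < n" "a ! (n - 1 - i) < n" using gr_lt[OF g] i by auto
    moreover have "Suc (n - 2 - i) = n - 1 - i" using i by simp
    ultimately show ?thesis by (simp add: of_nat_diff)
  qed
  also have "\<dots> = absdiffs a ! (n - 2 - i)" using absdiffs_nth[of "n - 2 - i" a] i l by simp
  also have "\<dots> = rev (absdiffs a) ! i" using i l by (simp add: rev_nth absdiffs_length numeral_2_eq_2)
  finally show "absdiffs (rc n a) ! i = rev (absdiffs a) ! i" .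
qed

lemma gr_rc:
  assumes g: "graceful_perm n a"
  shows "graceful_perm n (rc n a)"
proof -
  have l: "length a = n" and d: "distinct a" and s: "set a = {0..<n}"
    using g by (auto simp: graceful_perm_def)
  have inj: "inj_on (\<lambda>x. n - 1 - x) {0..<n}" by (auto simp: inj_on_def)
  have inj2: "inj_on ((-) (n - Suc 0)) {0..<n}" by (auto simp: inj_on_def)
  have img: "(\<lambda>x. n - 1 - x) ` {0..<n} = {0..<n}"
  proof
    show "(\<lambda>x. n - 1 - x) ` {0..<n} \<subseteq> {0..<n}" by auto
    show "{0..<n} \<subseteq> (\<lambda>x. n - 1 - x) ` {0..<n}"
    proof
      fix y assume "y \<in> {0..<n}"
      then have "y = n - 1 - (n - 1 - y)" "n - 1 - y \<in> {0..<n}" by auto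
      then show "y \<in> (\<lambda>x. n - 1 - x) ` {0..<n}" by blast
    qed
  qed
  have "distinct (rc n a)" unfolding rc_def using d s inj2 by (simp add: distinct_map)
  moreover have "set (rc n a) = {0..<n}" unfolding rc_def using s img by simp
  moreover have "length (rc n a) = n" unfolding rc_def using l by simp
  ultimately show ?thesis using g absdiffs_rc[OF g] by (simp add: graceful_perm_def)
qed


lemma wrap:
  fixes f :: "nat \<Rightarrow> nat \<times> bool"
  assumes g: "graceful_perm n a" and n: "n \<ge> 2"
    and f0: "f 0 = (a ! 0, False)" and f1: "f 1 = (a ! 1, False)"
    and N: "\<And>s w. w < 2*n+1 \<Longrightarrow> \<exists>k<2*(2*n+1). f k = (w, s)"
    and LR: "\<And>w. 0 < w \<Longrightarrow> w < 2*n+1 \<Longrightarrow> \<exists>k<2*(2*n+1)-1. snd (f k) = snd (f (Suc k)) \<and>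
               (fst (f (Suc k)) = fst (f k) + w \<or> fst (f k) = fst (f (Suc k)) + (2*n+1 - w))"
    and LF: "\<And>w. w < 2*n+1 \<Longrightarrow> \<exists>k<2*(2*n+1)-1. snd (f k) \<noteq> snd (f (Suc k)) \<and> (fst (f k) + fst (f (Suc k))) mod (2*n+1) = w"
  shows "\<exists>gs. sequencing (dihedral (2*n+1)) gs \<and> hd gs = dih_u [^]\<^bsub>dihedral (2*n+1)\<^esub> (absdiffs a ! 0)"
proof -
  define sg :: int where "sg = (if a ! 0 \<le> a ! 1 then 1 else -1)"
  define m where "m = 2*n+1"
  have m: "m \<ge> 2" unfolding m_def using n by simp
  have sg: "sg = 1 \<or> sg = -1" unfolding sg_def by simp
  define gs where "gs = map (\<lambda>k. lab m sg (int (fst (f 0))) (f k) (f (Suc k))) [0..<2*m-1]"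
  have sq: "sequencing (dihedral m) gs"
    unfolding gs_def using seq_from_path[OF m sg, of f] f0 N LR LF unfolding m_def by simp
  have l: "length a = n" using g by (simp add: graceful_perm_def)
  define b where "b = absdiffs a ! 0"
  have b: "b = nat \<bar>int (a ! 1) - int (a ! 0)\<bar>" unfolding b_def using absdiffs_nth[of 0 a] l n by simp
  have a1: "a ! 1 < n" "a ! 0 < n" using gr_lt[OF g] n by auto
  have bm: "b < m" unfolding m_def b using a1 by linarith
  have "sg * (int (a ! 1) - int (a ! 0)) = int b" unfolding sg_def b by auto
  then have "hd gs = (b, False)" unfolding gs_def using m f0 f1 bm by (simp add: hd_map lab_def upt_rec)
  moreover have "dih_u [^]\<^bsub>dihedral m\<^esub> b = (b, False)" using dih_pow[OF m] bm by simp
  ultimately show ?thesis using sq unfolding m_def b_def by metis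
qed


lemma div2_sum: "(j::nat) div 2 + Suc j div 2 = j" by presburger

definition f2 :: "nat \<Rightarrow> nat \<Rightarrow> nat list \<Rightarrow> nat \<Rightarrow> nat \<times> bool" where
  "f2 n p a k = (if k < n then (a ! k, False) else if k < 2*n then (a ! (2*n-1-k), True)
     else if k < 4*n+2-2*p then (p + n + (k - 2*n) div 2, even (k - 2*n))
     else (n + (k - (4*n+2-2*p)) div 2, odd (k - (4*n+2-2*p))))"

lemma f2_R: "k < n \<Longrightarrow> f2 n p a k = (a ! k, False)" by (simp add: f2_def)
lemma f2_F: "n \<le> k \<Longrightarrow> k < 2*n \<Longrightarrow> f2 n p a k = (a ! (2*n-1-k), True)" by (simp add: f2_def)
lemma f2_Z1: "p < n \<Longrightarrow> j < 2*n+2-2*p \<Longrightarrow> f2 n p a (2*n+j) = (p + n + j div 2, even j)"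
  by (simp add: f2_def)
lemma f2_Z2: assumes "p < n" shows "f2 n p a (4*n+2-2*p+j) = (n + j div 2, odd j)"
proof -
  have "\<not> 4*n+2-2*p+j < n" "\<not> 4*n+2-2*p+j < 2*n" "\<not> 4*n+2-2*p+j < 4*n+2-2*p"
    "4*n+2-2*p+j - (4*n+2-2*p) = j" using assms by auto
  then show ?thesis unfolding f2_def by presburger
qed

lemma C2:
  assumes g: "graceful_perm n a" and n: "n \<ge> 2" and pa: "a ! (n-1) + 1 = a ! 0"
  shows "\<exists>gs. sequencing (dihedral (2*n+1)) gs \<and> hd gs = dih_u [^]\<^bsub>dihedral (2*n+1)\<^esub> (absdiffs a ! 0)"
proof -
  define p where "p = a ! 0"
  define f where "f = f2 n p a"
  have pn: "p < n" unfolding p_def using gr_lt[OF g] n by simp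
  have p1: "p \<ge> 1" using pa unfolding p_def by simp
  have an: "a ! (n-1) = p - 1" using pa unfolding p_def by simp
  have fR: "\<And>k. k < n \<Longrightarrow> f k = (a ! k, False)" unfolding f_def by (rule f2_R)
  have fF: "\<And>k. n \<le> k \<Longrightarrow> k < 2*n \<Longrightarrow> f k = (a ! (2*n-1-k), True)" unfolding f_def by (rule f2_F)
  have fZ1: "\<And>j. j < 2*n+2-2*p \<Longrightarrow> f (2*n+j) = (p + n + j div 2, even j)" unfolding f_def using pn by (rule f2_Z1)
  have fZ2: "\<And>j. f (4*n+2-2*p+j) = (n + j div 2, odd j)" unfolding f_def using pn by (rule f2_Z2)
  have N: "\<exists>k<2*(2*n+1). f k = (w, s)" if w: "w < 2*n+1" for s w
  proof -
    consider "w < n" | "p + n \<le> w" | "n \<le> w" "w < p + n" by linarith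
    then show ?thesis
    proof cases
      case 1
      then obtain i where i: "i < n" "a ! i = w" using gr_val[OF g] by blast
      show ?thesis
      proof (cases s)
        case True
        have "f (2*n-1-i) = (w, s)" using fF[of "2*n-1-i"] i True by simp
        moreover have "2*n-1-i < 2*(2*n+1)" by simp
        ultimately show ?thesis by blast
      next
        case False
        have "f i = (w, s)" using fR i False by simp
        moreover have "i < 2*(2*n+1)" using i by simp
        ultimately show ?thesis by blast
      qed
    next
      case 2
      define x where "x = w - p - n"
      have x: "w = p + n + x" "2*x+1 < 2*n+2-2*p" unfolding x_def using 2 w by auto
      show ?thesis
      proof (cases s)
        case True
        have "f (2*n + 2*x) = (w, s)" using fZ1[of "2*x"] x True by simp
        moreover have "2*n + 2*x < 2*(2*n+1)" using x by simp
        ultimately show ?thesis by blast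
      next
        case False
        have "f (2*n + (2*x+1)) = (w, s)" using fZ1[of "2*x+1"] x False by simp
        moreover have "2*n + (2*x+1) < 2*(2*n+1)" using x by simp
        ultimately show ?thesis by blast
      qed
    next
      case 3
      define x where "x = w - n"
      have x: "w = n + x" "2*x+1 < 2*p" unfolding x_def using 3 by auto
      show ?thesis
      proof (cases s)
        case True
        have "f (4*n+2-2*p + (2*x+1)) = (w, s)" using fZ2[of "2*x+1"] x True by simp
        moreover have "4*n+2-2*p + (2*x+1) < 2*(2*n+1)" using x pn by simp
        ultimately show ?thesis by blast
      next
        case False
        have "f (4*n+2-2*p + 2*x) = (w, s)" using fZ2[of "2*x"] x False by simp
        moreover have "4*n+2-2*p + 2*x < 2*(2*n+1)" using x pn by simp
        ultimately show ?thesis by blast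
      qed
    qed
  qed
  have LR: "\<exists>k<2*(2*n+1)-1. snd (f k) = snd (f (Suc k)) \<and>
               (fst (f (Suc k)) = fst (f k) + w \<or> fst (f k) = fst (f (Suc k)) + (2*n+1 - w))"
    if w: "0 < w" "w < 2*n+1" for w
  proof -
    consider "w < n" | "w = n" | "w = n + 1" | "n + 2 \<le> w" by linarith
    then show ?thesis
    proof cases
      case 1
      obtain i where i: "Suc i < n" "a ! Suc i = a ! i + w \<or> a ! i = a ! Suc i + w"
        using gr_diff[OF g _ 1] w by auto
      show ?thesis
      proof (cases "a ! Suc i = a ! i + w")
        case True
        then have "snd (f i) = snd (f (Suc i)) \<and> fst (f (Suc i)) = fst (f i) + w" using fR i by simp
        moreover have "i < 2*(2*n+1)-1" using i by simp
        ultimately show ?thesis by blast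
      next
        case False
        then have h: "a ! i = a ! Suc i + w" using i by simp
        define k where "k = 2*n-2-i"
        have k: "n \<le> k" "Suc k < 2*n" "2*n-1-k = Suc i" "2*n-1-Suc k = i" unfolding k_def using i by auto
        have "f k = (a ! Suc i, True)" "f (Suc k) = (a ! i, True)" using fF k by auto
        then have "snd (f k) = snd (f (Suc k)) \<and> fst (f (Suc k)) = fst (f k) + w" using h by simp
        moreover have "k < 2*(2*n+1)-1" using k by simp
        ultimately show ?thesis by blast
      qed
    next
      case 2
      have "f (2*n-1) = (p, True)" using fF[of "2*n-1"] n unfolding p_def by simp
      moreover have "f (Suc (2*n-1)) = (p + n, True)" using fZ1[of 0] pn n by simp
      ultimately have "snd (f (2*n-1)) = snd (f (Suc (2*n-1))) \<and> fst (f (Suc (2*n-1))) = fst (f (2*n-1)) + w"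
        using 2 by simp
      moreover have "2*n-1 < 2*(2*n+1)-1" by simp
      ultimately show ?thesis by blast
    next
      case 3
      define k where "k = 2*n + (2*(n-p)+1)"
      have "f k = (2*n, False)" unfolding k_def using fZ1[of "2*(n-p)+1"] pn by simp
      moreover have "Suc k = 4*n+2-2*p+0" unfolding k_def using pn by simp
      then have "f (Suc k) = (n, False)" using fZ2[of 0] by simp
      ultimately have "snd (f k) = snd (f (Suc k)) \<and> fst (f k) = fst (f (Suc k)) + (2*n+1 - w)"
        using 3 by simp
      moreover have "k < 2*(2*n+1)-1" unfolding k_def using pn p1 by simp
      ultimately show ?thesis by blast
    next
      case 4
      define v where "v = 2*n+1-w"
      have v: "1 \<le> v" "v < n" unfolding v_def using 4 w by auto
      obtain i where i: "Suc i < n" "a ! Suc i = a ! i + v \<or> a ! i = a ! Suc i + v"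
        using gr_diff[OF g v] by auto
      show ?thesis
      proof (cases "a ! i = a ! Suc i + v")
        case True
        then have "snd (f i) = snd (f (Suc i)) \<and> fst (f i) = fst (f (Suc i)) + (2*n+1-w)"
          using fR i v_def by simp
        moreover have "i < 2*(2*n+1)-1" using i by simp
        ultimately show ?thesis by blast
      next
        case False
        then have h: "a ! Suc i = a ! i + v" using i by simp
        define k where "k = 2*n-2-i"
        have k: "n \<le> k" "Suc k < 2*n" "2*n-1-k = Suc i" "2*n-1-Suc k = i" unfolding k_def using i by auto
        have "f k = (a ! Suc i, True)" "f (Suc k) = (a ! i, True)" using fF k by auto
        then have "snd (f k) = snd (f (Suc k)) \<and> fst (f k) = fst (f (Suc k)) + (2*n+1-w)" using h v_def by simp
        moreover have "k < 2*(2*n+1)-1" using k by simp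
        ultimately show ?thesis by blast
      qed
    qed
  qed
  have Z1s: "snd (f (2*n+j)) \<noteq> snd (f (Suc (2*n+j))) \<and> fst (f (2*n+j)) + fst (f (Suc (2*n+j))) = 2*p+2*n+j"
    if "j < 2*n+1-2*p" for j
  proof -
    have "f (2*n+j) = (p + n + j div 2, even j)" using fZ1 that by simp
    moreover have "f (2*n+Suc j) = (p + n + Suc j div 2, even (Suc j))" using fZ1[of "Suc j"] that by simp
    ultimately show ?thesis using div2_sum[of j] by simp
  qed
  have Z2s: "snd (f (4*n+2-2*p+j)) \<noteq> snd (f (Suc (4*n+2-2*p+j))) \<and> fst (f (4*n+2-2*p+j)) + fst (f (Suc (4*n+2-2*p+j))) = 2*n+j"
    for j
  proof -
    have "f (4*n+2-2*p+j) = (n + j div 2, odd j)" using fZ2 by simp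
    moreover have "f (4*n+2-2*p+Suc j) = (n + Suc j div 2, odd (Suc j))" using fZ2[of "Suc j"] by simp
    ultimately show ?thesis using div2_sum[of j] by simp
  qed
  have LF: "\<exists>k<2*(2*n+1)-1. snd (f k) \<noteq> snd (f (Suc k)) \<and> (fst (f k) + fst (f (Suc k))) mod (2*n+1) = w"
    if w: "w < 2*n+1" for w
  proof -
    consider "w = 2*n" | "w + 3 \<le> 2*p" | "w + 2 = 2*p" | "2*p \<le> w + 1" "w < 2*n" using w by linarith
    then show ?thesis
    proof cases
      case 1
      have "(fst (f (4*n+2-2*p+0)) + fst (f (Suc (4*n+2-2*p+0)))) mod (2*n+1) = w"
        using Z2s[of 0] 1 by simp
      moreover have "4*n+2-2*p+0 < 2*(2*n+1)-1" using p1 by simp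
      ultimately show ?thesis using Z2s[of 0] by blast
    next
      case 2
      have "(2*n+(w+1)) mod (2*n+1) = w" using w
        by (metis add.commute add.left_commute add_Suc_right mod_add_self2 mod_less Suc_eq_plus1)
      then have "(fst (f (4*n+2-2*p+(w+1))) + fst (f (Suc (4*n+2-2*p+(w+1))))) mod (2*n+1) = w"
        using Z2s[of "w+1"] by simp
      moreover have "4*n+2-2*p+(w+1) < 2*(2*n+1)-1" using 2 pn by simp
      ultimately show ?thesis using Z2s[of "w+1"] by blast
    next
      case 3
      have "f (n-1) = (p-1, False)" using fR[of "n-1"] an n by simp
      moreover have "f (Suc (n-1)) = (p-1, True)" using fF[of "Suc (n-1)"] an n by simp
      ultimately have "snd (f (n-1)) \<noteq> snd (f (Suc (n-1))) \<and> (fst (f (n-1)) + fst (f (Suc (n-1)))) mod (2*n+1) = w"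
        using 3 w p1 by simp
      moreover have "n-1 < 2*(2*n+1)-1" by simp
      ultimately show ?thesis by blast
    next
      case 4
      define j where "j = w + 1 - 2*p"
      have j: "j < 2*n+1-2*p" "2*p+2*n+j = 2*n+(w+1)" unfolding j_def using 4 pn by auto
      have "(2*n+(w+1)) mod (2*n+1) = w" using w
        by (metis add.commute add.left_commute add_Suc_right mod_add_self2 mod_less Suc_eq_plus1)
      then have "(fst (f (2*n+j)) + fst (f (Suc (2*n+j)))) mod (2*n+1) = w"
        using Z1s[OF j(1)] j(2) by simp
      moreover have "2*n+j < 2*(2*n+1)-1" using j pn by simp
      ultimately show ?thesis using Z1s[OF j(1)] by blast
    qed
  qed
  have f0: "f 0 = (a ! 0, False)" using fR n by simp
  have f1: "f 1 = (a ! 1, False)" using fR n by simp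
  show ?thesis using wrap[OF g n f0 f1 N LR LF] .
qed


definition zz :: "nat \<Rightarrow> nat \<Rightarrow> nat \<Rightarrow> nat" where
  "zz n e j = (if Suc j div 2 \<le> e then e - Suc j div 2 else e + n + 1 - Suc j div 2)"

definition f1 :: "nat \<Rightarrow> nat \<Rightarrow> nat list \<Rightarrow> nat \<Rightarrow> nat \<times> bool" where
  "f1 n e a k = (if k < n then (a ! k, False) else if k < 3*n+2 then (n + zz n e (k - n), odd (k - n))
     else (a ! (4*n+1-k), True))"

lemma f1_R: "k < n \<Longrightarrow> f1 n e a k = (a ! k, False)" by (simp add: f1_def)
lemma f1_F: "3*n+2 \<le> k \<Longrightarrow> f1 n e a k = (a ! (4*n+1-k), True)" by (simp add: f1_def)
lemma f1_Zr: "i \<le> n \<Longrightarrow> f1 n e a (n + 2*i) = (n + (if i \<le> e then e - i else e+n+1-i), False)"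
  by (simp add: f1_def zz_def)
lemma f1_Zf: "i \<le> n \<Longrightarrow> f1 n e a (n + (2*i+1)) = (n + (if i+1 \<le> e then e-1-i else e+n-i), True)"
  by (simp add: f1_def zz_def)

lemma C1:
  assumes g: "graceful_perm n a" and ne: "n = 2*e" and e: "e \<ge> 1" and an: "a ! (n-1) = e"
  shows "\<exists>gs. sequencing (dihedral (2*n+1)) gs \<and> hd gs = dih_u [^]\<^bsub>dihedral (2*n+1)\<^esub> (absdiffs a ! 0)"
proof -
  define f where "f = f1 n e a"
  have n: "n \<ge> 2" using ne e by simp
  have fR: "\<And>k. k < n \<Longrightarrow> f k = (a ! k, False)" unfolding f_def by (rule f1_R)
  have fF: "\<And>k. 3*n+2 \<le> k \<Longrightarrow> f k = (a ! (4*n+1-k), True)" unfolding f_def by (rule f1_F)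
  have fZr: "\<And>i. i \<le> n \<Longrightarrow> f (n + 2*i) = (n + (if i \<le> e then e - i else e+n+1-i), False)"
    unfolding f_def by (rule f1_Zr)
  have fZf: "\<And>i. i \<le> n \<Longrightarrow> f (n + (2*i+1)) = (n + (if i+1 \<le> e then e-1-i else e+n-i), True)"
    unfolding f_def by (rule f1_Zf)
  have Zs: "snd (f (n+j)) \<noteq> snd (f (Suc (n+j))) \<and>
     fst (f (n+j)) + fst (f (Suc (n+j))) = 2*n + (if j < n then n-1-j else if j = n then n else 3*n+1-j)"
    if j: "j \<le> 2*n" for j
  proof (cases "even j")
    case True
    then obtain i where i: "j = 2*i" by blast
    have "f (n+j) = (n + (if i \<le> e then e - i else e+n+1-i), False)" using fZr[of i] i j by simp
    moreover have "f (Suc (n+j)) = (n + (if i+1 \<le> e then e-1-i else e+n-i), True)"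
      using fZf[of i] i j by simp
    ultimately show ?thesis using i ne j by auto
  next
    case False
    then obtain i where i: "j = 2*i+1" by (metis oddE)
    have "f (n+j) = (n + (if i+1 \<le> e then e-1-i else e+n-i), True)" using fZf[of i] i j by simp
    moreover have "Suc (n+j) = n + 2*(i+1)" using i by simp
    then have "f (Suc (n+j)) = (n + (if i+1 \<le> e then e - (i+1) else e+n+1-(i+1)), False)"
      using fZr[of "i+1"] i j by simp
    moreover have "j \<noteq> n" using i ne by presburger
    ultimately show ?thesis using i ne j by auto
  qed
  have N: "\<exists>k<2*(2*n+1). f k = (w, s)" if w: "w < 2*n+1" for s w
  proof (cases "w < n")
    case True
    then obtain i where i: "i < n" "a ! i = w" using gr_val[OF g] by blast
    show ?thesis
    proof (cases s)
      case True
      have "f (4*n+1-i) = (w, s)" using fF[of "4*n+1-i"] i True by simp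
      moreover have "4*n+1-i < 2*(2*n+1)" by simp
      ultimately show ?thesis by blast
    next
      case False
      have "f i = (w, s)" using fR i False by simp
      moreover have "i < 2*(2*n+1)" using i by simp
      ultimately show ?thesis by blast
    qed
  next
    case False
    define v where "v = w - n"
    have v: "w = n + v" "v \<le> n" unfolding v_def using False w by auto
    show ?thesis
    proof (cases s)
      case True
      define i where "i = (if v < e then e-1-v else e+n-v)"
      have i: "i \<le> n" "(if i+1 \<le> e then e-1-i else e+n-i) = v" unfolding i_def using v ne by auto
      have "f (n + (2*i+1)) = (w, s)" using fZf[OF i(1)] i(2) v True by simp
      moreover have "n + (2*i+1) < 2*(2*n+1)" using i by simp
      ultimately show ?thesis by blast
    next
      case False
      define i where "i = (if v \<le> e then e-v else e+n+1-v)"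
      have i: "i \<le> n" "(if i \<le> e then e - i else e+n+1-i) = v" unfolding i_def using v ne by auto
      have "f (n + 2*i) = (w, s)" using fZr[OF i(1)] i(2) v False by simp
      moreover have "n + 2*i < 2*(2*n+1)" using i by simp
      ultimately show ?thesis by blast
    qed
  qed
  have LR: "\<exists>k<2*(2*n+1)-1. snd (f k) = snd (f (Suc k)) \<and>
               (fst (f (Suc k)) = fst (f k) + w \<or> fst (f k) = fst (f (Suc k)) + (2*n+1 - w))"
    if w: "0 < w" "w < 2*n+1" for w
  proof -
    consider "w < n" | "w = n" | "w = n + 1" | "n + 2 \<le> w" by linarith
    then show ?thesis
    proof cases
      case 1
      obtain i where i: "Suc i < n" "a ! Suc i = a ! i + w \<or> a ! i = a ! Suc i + w"
        using gr_diff[OF g _ 1] w by auto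
      show ?thesis
      proof (cases "a ! Suc i = a ! i + w")
        case True
        then have "snd (f i) = snd (f (Suc i)) \<and> fst (f (Suc i)) = fst (f i) + w" using fR i by simp
        moreover have "i < 2*(2*n+1)-1" using i by simp
        ultimately show ?thesis by blast
      next
        case False
        then have h: "a ! i = a ! Suc i + w" using i by simp
        define k where "k = 4*n-i"
        have k: "3*n+2 \<le> k" "4*n+1-k = Suc i" "4*n+1-Suc k = i" unfolding k_def using i by auto
        have "f k = (a ! Suc i, True)" "f (Suc k) = (a ! i, True)" using fF k by auto
        then have "snd (f k) = snd (f (Suc k)) \<and> fst (f (Suc k)) = fst (f k) + w" using h by simp
        moreover have "k < 2*(2*n+1)-1" unfolding k_def by simp
        ultimately show ?thesis by blast
      qed
    next
      case 2
      have "f (n-1) = (e, False)" using fR[of "n-1"] an n by simp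
      moreover have "f (Suc (n-1)) = (n + e, False)" using fZr[of 0] n by simp
      ultimately have "snd (f (n-1)) = snd (f (Suc (n-1))) \<and> fst (f (Suc (n-1))) = fst (f (n-1)) + w"
        using 2 by simp
      moreover have "n-1 < 2*(2*n+1)-1" by simp
      ultimately show ?thesis by blast
    next
      case 3
      have "f (n + (2*n+1)) = (n + e, True)" using fZf[of n] ne e by simp
      moreover have "f (Suc (n + (2*n+1))) = (e, True)" using fF[of "Suc (n + (2*n+1))"] an by simp
      ultimately have "snd (f (n + (2*n+1))) = snd (f (Suc (n + (2*n+1)))) \<and>
          fst (f (n + (2*n+1))) = fst (f (Suc (n + (2*n+1)))) + (2*n+1 - w)"
        using 3 by simp
      moreover have "n + (2*n+1) < 2*(2*n+1)-1" using n by simp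
      ultimately show ?thesis by blast
    next
      case 4
      define v where "v = 2*n+1-w"
      have v: "1 \<le> v" "v < n" unfolding v_def using 4 w by auto
      obtain i where i: "Suc i < n" "a ! Suc i = a ! i + v \<or> a ! i = a ! Suc i + v"
        using gr_diff[OF g v] by auto
      show ?thesis
      proof (cases "a ! i = a ! Suc i + v")
        case True
        then have "snd (f i) = snd (f (Suc i)) \<and> fst (f i) = fst (f (Suc i)) + (2*n+1-w)"
          using fR i v_def by simp
        moreover have "i < 2*(2*n+1)-1" using i by simp
        ultimately show ?thesis by blast
      next
        case False
        then have h: "a ! Suc i = a ! i + v" using i by simp
        define k where "k = 4*n-i"
        have k: "3*n+2 \<le> k" "4*n+1-k = Suc i" "4*n+1-Suc k = i" unfolding k_def using i by auto
        have "f k = (a ! Suc i, True)" "f (Suc k) = (a ! i, True)" using fF k by auto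
        then have "snd (f k) = snd (f (Suc k)) \<and> fst (f k) = fst (f (Suc k)) + (2*n+1-w)" using h v_def by simp
        moreover have "k < 2*(2*n+1)-1" unfolding k_def by simp
        ultimately show ?thesis by blast
      qed
    qed
  qed
  have LF: "\<exists>k<2*(2*n+1)-1. snd (f k) \<noteq> snd (f (Suc k)) \<and> (fst (f k) + fst (f (Suc k))) mod (2*n+1) = w"
    if w: "w < 2*n+1" for w
  proof -
    define j where "j = (if w = 2*n then n-1 else if w + 2 \<le> n then n-2-w else if w + 1 = n then n else 3*n - w)"
    have j: "j \<le> 2*n" unfolding j_def by auto
    have "(2*n + (if j < n then n-1-j else if j = n then n else 3*n+1-j)) mod (2*n+1) = w"
    proof -
      consider "w = 2*n" | "w + 2 \<le> n" | "w + 1 = n" | "n \<le> w" "w < 2*n" using w by linarith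
      then show ?thesis
      proof cases
        case 1 then show ?thesis unfolding j_def using n by simp
      next
        case 2
        then have "(if j < n then n-1-j else if j = n then n else 3*n+1-j) = w + 1" unfolding j_def by auto
        moreover have "(2*n + (w+1)) mod (2*n+1) = w" using w
          by (metis add.commute add.left_commute add_Suc_right mod_add_self2 mod_less Suc_eq_plus1)
        ultimately show ?thesis by simp
      next
        case 3
        then have "(if j < n then n-1-j else if j = n then n else 3*n+1-j) = w + 1" unfolding j_def by auto
        moreover have "(2*n + (w+1)) mod (2*n+1) = w" using w
          by (metis add.commute add.left_commute add_Suc_right mod_add_self2 mod_less Suc_eq_plus1)
        ultimately show ?thesis by simp
      next
        case 4
        then have "(if j < n then n-1-j else if j = n then n else 3*n+1-j) = w + 1" unfolding j_def by auto
        moreover have "(2*n + (w+1)) mod (2*n+1) = w" using w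
          by (metis add.commute add.left_commute add_Suc_right mod_add_self2 mod_less Suc_eq_plus1)
        ultimately show ?thesis by simp
      qed
    qed
    then have "snd (f (n+j)) \<noteq> snd (f (Suc (n+j))) \<and> (fst (f (n+j)) + fst (f (Suc (n+j)))) mod (2*n+1) = w"
      using Zs[OF j] by simp
    moreover have "n+j < 2*(2*n+1)-1" using j by simp
    ultimately show ?thesis by blast
  qed
  have f0: "f 0 = (a ! 0, False)" using fR n by simp
  have f1: "f 1 = (a ! 1, False)" using fR n by simp
  show ?thesis using wrap[OF g n f0 f1 N LR LF] .
qed


lemma rc_case:
  assumes g: "graceful_perm n a" and n: "n \<ge> 2" and h: "a ! 0 = a ! (n-1) + 1"
  shows "\<exists>gs. sequencing (dihedral (2*n+1)) gs \<and> hd gs = dih_u [^]\<^bsub>dihedral (2*n+1)\<^esub> (absdiffs a ! (n-2))"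
proof -
  have l: "length a = n" using g by (simp add: graceful_perm_def)
  have g2: "graceful_perm n (rc n a)" using gr_rc[OF g] .
  have r0: "rc n a ! 0 = n - 1 - a ! (n-1)" using rc_nth[OF l, of 0] n by simp
  have r1: "rc n a ! (n-1) = n - 1 - a ! 0" using rc_nth[OF l, of "n-1"] n by simp
  have lt: "a ! 0 < n" "a ! (n-1) < n" using gr_lt[OF g] n by auto
  have "rc n a ! (n-1) + 1 = rc n a ! 0" unfolding r0 r1 using h lt by arith
  from C2[OF g2 n this] obtain gs where "sequencing (dihedral (2*n+1)) gs"
    "hd gs = dih_u [^]\<^bsub>dihedral (2*n+1)\<^esub> (absdiffs (rc n a) ! 0)" by blast
  moreover have "absdiffs (rc n a) ! 0 = absdiffs a ! (n-2)"
    using absdiffs_rc[OF g] l n by (simp add: rev_nth absdiffs_length numeral_2_eq_2)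
  ultimately show ?thesis by metis
qed

theorem lemma4p8:
  fixes l :: nat and as cs :: "nat list"
  assumes "l \<ge> 1"
    and "graceful_perm (2*l) as"
    and "graceful_perm (2*l+1) cs"
  shows "(as ! (2*l - 1) = l \<longrightarrow>
           (\<exists>gs. sequencing (dihedral (4*l+1)) gs \<and>
                 hd gs = dih_u [^]\<^bsub>dihedral (4*l+1)\<^esub> (absdiffs as ! 0)))
       \<and> (as ! 0 = l \<and> as ! (2*l - 1) = l - 1 \<longrightarrow>
           (\<exists>gs. sequencing (dihedral (4*l+1)) gs \<and>
                 hd gs = dih_u [^]\<^bsub>dihedral (4*l+1)\<^esub> (absdiffs as ! 0))
         \<and> (\<exists>gs. sequencing (dihedral (4*l+1)) gs \<and>
                 hd gs = dih_u [^]\<^bsub>dihedral (4*l+1)\<^esub> (absdiffs as ! (2*l - 2))))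
       \<and> (cs ! 0 = l \<and> cs ! (2*l) = l - 1 \<longrightarrow>
           (\<exists>gs. sequencing (dihedral (4*l+3)) gs \<and>
                 hd gs = dih_u [^]\<^bsub>dihedral (4*l+3)\<^esub> (absdiffs cs ! 0))
         \<and> (\<exists>gs. sequencing (dihedral (4*l+3)) gs \<and>
                 hd gs = dih_u [^]\<^bsub>dihedral (4*l+3)\<^esub> (absdiffs cs ! (2*l - 1))))"
proof -
  have m1: "2*(2*l)+1 = 4*l+1" by simp
  have m3: "2*(2*l+1)+1 = 4*l+3" by simp
  have n1: "2*l \<ge> 2" using assms(1) by simp
  have n3: "2*l+1 \<ge> 2" using assms(1) by simp
  have P1: "as ! (2*l - 1) = l \<longrightarrow>
           (\<exists>gs. sequencing (dihedral (4*l+1)) gs \<and>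
                 hd gs = dih_u [^]\<^bsub>dihedral (4*l+1)\<^esub> (absdiffs as ! 0))"
    using C1[OF assms(2) refl assms(1)] unfolding m1 by blast
  have P2: "as ! 0 = l \<and> as ! (2*l - 1) = l - 1 \<longrightarrow>
           (\<exists>gs. sequencing (dihedral (4*l+1)) gs \<and>
                 hd gs = dih_u [^]\<^bsub>dihedral (4*l+1)\<^esub> (absdiffs as ! 0))
         \<and> (\<exists>gs. sequencing (dihedral (4*l+1)) gs \<and>
                 hd gs = dih_u [^]\<^bsub>dihedral (4*l+1)\<^esub> (absdiffs as ! (2*l - 2)))"
  proof
    assume h: "as ! 0 = l \<and> as ! (2*l - 1) = l - 1"
    then have h1: "as ! (2*l - 1) + 1 = as ! 0" using assms(1) by simp
    have h2: "as ! 0 = as ! (2*l - 1) + 1" using h1 by simp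
    show "(\<exists>gs. sequencing (dihedral (4*l+1)) gs \<and>
                 hd gs = dih_u [^]\<^bsub>dihedral (4*l+1)\<^esub> (absdiffs as ! 0))
         \<and> (\<exists>gs. sequencing (dihedral (4*l+1)) gs \<and>
                 hd gs = dih_u [^]\<^bsub>dihedral (4*l+1)\<^esub> (absdiffs as ! (2*l - 2)))"
      using C2[OF assms(2) n1 h1] rc_case[OF assms(2) n1 h2] unfolding m1 by blast
  qed
  have P3: "cs ! 0 = l \<and> cs ! (2*l) = l - 1 \<longrightarrow>
           (\<exists>gs. sequencing (dihedral (4*l+3)) gs \<and>
                 hd gs = dih_u [^]\<^bsub>dihedral (4*l+3)\<^esub> (absdiffs cs ! 0))
         \<and> (\<exists>gs. sequencing (dihedral (4*l+3)) gs \<and>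
                 hd gs = dih_u [^]\<^bsub>dihedral (4*l+3)\<^esub> (absdiffs cs ! (2*l - 1)))"
  proof
    assume h: "cs ! 0 = l \<and> cs ! (2*l) = l - 1"
    then have h1: "cs ! (2*l+1 - 1) + 1 = cs ! 0" using assms(1) by simp
    have h2: "cs ! 0 = cs ! (2*l+1 - 1) + 1" using h1 by simp
    have e: "2*l+1-2 = 2*l-1" by simp
    show "(\<exists>gs. sequencing (dihedral (4*l+3)) gs \<and>
                 hd gs = dih_u [^]\<^bsub>dihedral (4*l+3)\<^esub> (absdiffs cs ! 0))
         \<and> (\<exists>gs. sequencing (dihedral (4*l+3)) gs \<and>
                 hd gs = dih_u [^]\<^bsub>dihedral (4*l+3)\<^esub> (absdiffs cs ! (2*l - 1)))"
      using C2[OF assms(3) n3 h1] rc_case[OF assms(3) n3 h2] unfolding m3 e by blast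
  qed
  show ?thesis using P1 P2 P3 by blast
qed

end
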